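(* For any schema $\mathrm{Sch}$ with constraints $\Sigma$ and result-bounded methods, a Boolean conjunctive query $Q$ is access monotonically-determined over $\mathrm{Sch}$ if and only if the following holds: for any two instances $I_1,I_2$ satisfying $\Sigma$, if $I_1$ and $I_2$ have a common subinstance $I_{\mathrm{acc}}$ that is access-valid in $I_1$, then $Q(I_1)\subseteq Q(I_2)$.
   Context: Instances are finite or infinite sets of facts; $\mathrm{Adom}(I)$ is the set of values occurring in $I$; a subinstance is a subset of the facts. A schema $\mathrm{Sch}$ consists of a relational signature, constraints $\Sigma$ (first-order sentences), and access methods; each method $\mathrm{mt}$ is associated with a relation $R$ and a set of input positions of $R$ and may have a result bound $k\in\mathbb{N}_{>0}$. An access on $I$ is $(\mathrm{mt},\mathrm{AccBind})$ with $\mathrm{AccBind}$ mapping the input positions of $\mathrm{mt}$ to $\mathrm{Adom}(I)$; matching tuples $M$ are the $R$-tuples of $I$ agreeing with $\mathrm{AccBind}$ on the input positions. $J\subseteq M$ is a valid output if $J=M$ when there is no bound, and when there is result bound $k$, $|J|\le k$ and for all $j\le k$, $|M|\ge j$ implies $|J|\ge j$. An access selection maps each access to matching tuples; it is valid if all its images are valid outputs. For a valid access selection $\sigma$ on $I$: $\mathrm{AccPart}_0=\mathrm{accessible}_0=\emptyset$; $\mathrm{AccPart}_{i+1}$ is the union of the facts $\sigma(\mathrm{mt},\mathrm{AccBind})$ over all methods and all bindings with values in $\mathrm{accessible}_i$; $\mathrm{accessible}_{i+1}=\mathrm{Adom}(\mathrm{AccPart}_{i+1})$; an accessible part of $I$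 is $\bigcup_i\mathrm{AccPart}_i$ for some valid $\sigma$. $Q$ is access monotonically-determined over $\mathrm{Sch}$ if for all $I_1,I_2$ satisfying $\Sigma$, whenever some accessible part of $I_1$ is a subset of some accessible part of $I_2$, $Q(I_1)\subseteq Q(I_2)$. A subinstance $I_{\mathrm{acc}}$ of $I_1$ is access-valid in $I_1$ if for every access $(\mathrm{mt},\mathrm{AccBind})$ with a method of $\mathrm{Sch}$ and a binding with values in $\mathrm{Adom}(I_{\mathrm{acc}})$, there is a set $J$ of matching tuples contained in $I_{\mathrm{acc}}$ that is a valid output to that access in $I_1$. *)

theory Defs
  imports Main
begin

type_synonym ('r, 'v) fact = "'r \<times> 'v list"
type_synonym ('r, 'v) inst = "('r, 'v) fact set"

definition adom :: "('r, 'v) inst \<Rightarrow> 'v set" where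
  "adom I = (\<Union>(R, t) \<in> I. set t)"

datatype 'v fterm = Var nat | Cst 'v

datatype ('r, 'v) fo =
    Atom 'r "'v fterm list"
  | Eq "'v fterm" "'v fterm"
  | Neg "('r, 'v) fo"
  | Conj "('r, 'v) fo" "('r, 'v) fo"
  | Ex nat "('r, 'v) fo"

fun tval :: "(nat \<Rightarrow> 'v) \<Rightarrow> 'v fterm \<Rightarrow> 'v" where
  "tval e (Var x) = e x"
| "tval e (Cst c) = c"

fun tvars :: "'v fterm \<Rightarrow> nat set" where
  "tvars (Var x) = {x}"
| "tvars (Cst c) = {}"

fun fv :: "('r, 'v) fo \<Rightarrow> nat set" where
  "fv (Atom R ts) = (\<Union>t \<in> set ts. tvars t)"
| "fv (Eq s t) = tvars s \<union> tvars t"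
| "fv (Neg \<phi>) = fv \<phi>"
| "fv (Conj \<phi> \<psi>) = fv \<phi> \<union> fv \<psi>"
| "fv (Ex x \<phi>) = fv \<phi> - {x}"

definition sentence :: "('r, 'v) fo \<Rightarrow> bool" where
  "sentence \<phi> \<longleftrightarrow> fv \<phi> = {}"

fun holds :: "('r, 'v) inst \<Rightarrow> (nat \<Rightarrow> 'v) \<Rightarrow> ('r, 'v) fo \<Rightarrow> bool" where
  "holds I e (Atom R ts) \<longleftrightarrow> (R, map (tval e) ts) \<in> I"
| "holds I e (Eq s t) \<longleftrightarrow> tval e s = tval e t"
| "holds I e (Neg \<phi>) \<longleftrightarrow> \<not> holds I e \<phi>"
| "holds I e (Conj \<phi> \<psi>) \<longleftrightarrow> holds I e \<phi> \<and> holds I e \<psi>"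
| "holds I e (Ex x \<phi>) \<longleftrightarrow> (\<exists>a \<in> adom I. holds I (e(x := a)) \<phi>)"

record ('r, 'v, 'm) schema =
  arity :: "'r \<Rightarrow> nat"
  constraints :: "('r, 'v) fo set"
  methods :: "'m set"
  mrel :: "'m \<Rightarrow> 'r"
  minputs :: "'m \<Rightarrow> nat set"
  mbound :: "'m \<Rightarrow> nat option"

definition wf_schema :: "('r, 'v, 'm) schema \<Rightarrow> bool" where
  "wf_schema S \<longleftrightarrow>
     (\<forall>\<phi> \<in> constraints S. sentence \<phi>) \<and>
     (\<forall>m \<in> methods S. minputs S m \<subseteq> {..< arity S (mrel S m)} \<and>
                      (\<forall>k. mbound S m = Some k \<longrightarrow> k > 0))"

definition is_instance :: "('r, 'v, 'm) schema \<Rightarrow> ('r, 'v) inst \<Rightarrow> bool" where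
  "is_instance S I \<longleftrightarrow> (\<forall>(R, t) \<in> I. length t = arity S R)"

definition satisfies :: "('r, 'v, 'm) schema \<Rightarrow> ('r, 'v) inst \<Rightarrow> bool" where
  "satisfies S I \<longleftrightarrow> (\<forall>\<phi> \<in> constraints S. \<forall>e. holds I e \<phi>)"

definition binding :: "('r, 'v, 'm) schema \<Rightarrow> 'm \<Rightarrow> 'v set \<Rightarrow> (nat \<rightharpoonup> 'v) \<Rightarrow> bool" where
  "binding S m A b \<longleftrightarrow> dom b = minputs S m \<and> ran b \<subseteq> A"

definition matching :: "('r, 'v, 'm) schema \<Rightarrow> ('r, 'v) inst \<Rightarrow> 'm \<Rightarrow> (nat \<rightharpoonup> 'v)
    \<Rightarrow> ('r, 'v) inst" where
  "matching S I m b = {(R, t) \<in> I. R = mrel S m \<and> (\<forall>i \<in> minputs S m. b i = Some (t ! i))}"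

text \<open>|M| \<ge> j, also meaningful for infinite M.\<close>
definition card_ge :: "'a set \<Rightarrow> nat \<Rightarrow> bool" where
  "card_ge M j \<longleftrightarrow> (\<exists>S \<subseteq> M. finite S \<and> card S = j)"

definition valid_output :: "nat option \<Rightarrow> 'a set \<Rightarrow> 'a set \<Rightarrow> bool" where
  "valid_output bd M J \<longleftrightarrow> J \<subseteq> M \<and>
     (case bd of
        None \<Rightarrow> J = M
      | Some k \<Rightarrow> finite J \<and> card J \<le> k \<and> (\<forall>j \<le> k. card_ge M j \<longrightarrow> card J \<ge> j))"

type_synonym ('r, 'v, 'm) selection = "'m \<Rightarrow> (nat \<rightharpoonup> 'v) \<Rightarrow> ('r, 'v) inst"

definition valid_selection :: "('r, 'v, 'm) schema \<Rightarrow> ('r, 'v) inst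
    \<Rightarrow> ('r, 'v, 'm) selection \<Rightarrow> bool" where
  "valid_selection S I \<sigma> \<longleftrightarrow>
     (\<forall>m \<in> methods S. \<forall>b. binding S m (adom I) b \<longrightarrow>
        valid_output (mbound S m) (matching S I m b) (\<sigma> m b))"

fun accpart :: "('r, 'v, 'm) schema \<Rightarrow> ('r, 'v, 'm) selection \<Rightarrow> nat \<Rightarrow> ('r, 'v) inst" where
  "accpart S \<sigma> 0 = {}"
| "accpart S \<sigma> (Suc i) =
     (\<Union>{\<sigma> m b | m b. m \<in> methods S \<and> binding S m (adom (accpart S \<sigma> i)) b})"

definition accessible_part :: "('r, 'v, 'm) schema \<Rightarrow> ('r, 'v) inst
    \<Rightarrow> ('r, 'v) inst \<Rightarrow> bool" where
  "accessible_part S I A \<longleftrightarrow>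
     (\<exists>\<sigma>. valid_selection S I \<sigma> \<and> A = (\<Union>i. accpart S \<sigma> i))"

type_synonym ('r, 'v) bcq = "('r \<times> 'v fterm list) list"

definition cq_holds :: "('r, 'v) bcq \<Rightarrow> ('r, 'v) inst \<Rightarrow> bool" where
  "cq_holds Q I \<longleftrightarrow> (\<exists>e. \<forall>(R, ts) \<in> set Q. (R, map (tval e) ts) \<in> I)"

definition access_mon_det :: "('r, 'v, 'm) schema \<Rightarrow> ('r, 'v) bcq \<Rightarrow> bool" where
  "access_mon_det S Q \<longleftrightarrow>
     (\<forall>I1 I2. is_instance S I1 \<and> is_instance S I2 \<and> satisfies S I1 \<and> satisfies S I2 \<and>
        (\<exists>A1 A2. accessible_part S I1 A1 \<and> accessible_part S I2 A2 \<and> A1 \<subseteq> A2)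
        \<longrightarrow> (cq_holds Q I1 \<longrightarrow> cq_holds Q I2))"

definition access_valid :: "('r, 'v, 'm) schema \<Rightarrow> ('r, 'v) inst
    \<Rightarrow> ('r, 'v) inst \<Rightarrow> bool" where
  "access_valid S I1 Iacc \<longleftrightarrow> Iacc \<subseteq> I1 \<and>
     (\<forall>m \<in> methods S. \<forall>b. binding S m (adom Iacc) b \<longrightarrow>
        (\<exists>J. J \<subseteq> Iacc \<and> valid_output (mbound S m) (matching S I1 m b) J))"

end

theory Submission
  imports Defs
begin

lemma adom_mono: "A \<subseteq> B \<Longrightarrow> adom A \<subseteq> adom B"
  unfolding adom_def by blast

lemma binding_mono: "binding S m A b \<Longrightarrow> A \<subseteq> B \<Longrightarrow> binding S m B b"
  unfolding binding_def by blast

lemma not_card_ge: "\<not> card_ge M k \<Longrightarrow> finite M \<and> card M < k"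
proof -
  assume a: "\<not> card_ge M k"
  have fin: "finite M"
  proof (rule ccontr)
    assume "infinite M"
    then obtain T where "T \<subseteq> M" "finite T" "card T = k"
      using infinite_arbitrarily_large by blast
    then show False using a unfolding card_ge_def by blast
  qed
  moreover have "card M < k"
  proof (rule ccontr)
    assume "\<not> card M < k"
    then have "k \<le> card M" by simp
    then obtain T where "T \<subseteq> M" "card T = k" "finite T"
      by (rule obtain_subset_with_card_n)
    then show False using a unfolding card_ge_def by blast
  qed
  ultimately show ?thesis by blast
qed

lemma extend_subset:
  assumes "finite J1" "J1 \<subseteq> M" "card J1 \<le> n" "card_ge M n"
  shows "\<exists>J. J1 \<subseteq> J \<and> J \<subseteq> M \<and> finite J \<and> card J = n"
proof -
  obtain S where S: "S \<subseteq> M" "finite S" "card S = n" using assms(4) unfolding card_ge_def by blast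
  have "card S \<le> card (J1 \<union> S)" using S assms(1) by (intro card_mono) auto
  also have "card (J1 \<union> S) = card J1 + card (S - J1)"
    using S assms(1) by (metis Un_Diff_cancel card_Un_disjoint Diff_disjoint finite_Diff)
  finally have "n - card J1 \<le> card (S - J1)" using S by simp
  then obtain T where T: "T \<subseteq> S - J1" "card T = n - card J1" "finite T"
    by (rule obtain_subset_with_card_n)
  have "card (J1 \<union> T) = card J1 + card T"
    using T assms(1) by (intro card_Un_disjoint) auto
  then have "card (J1 \<union> T) = n" using T assms(3) by simp
  then show ?thesis using T S assms(1,2) by (intro exI[of _ "J1 \<union> T"]) auto
qed

lemma extend_output:
  assumes "J1 \<subseteq> M"
    and "\<And>k. bd = Some k \<Longrightarrow> finite J1 \<and> card J1 \<le> k"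
  shows "\<exists>J. J1 \<subseteq> J \<and> valid_output bd M J"
proof (cases bd)
  case None
  then show ?thesis using assms unfolding valid_output_def by auto
next
  case (Some k)
  note fk = assms(2)[OF Some]
  show ?thesis
  proof (cases "card_ge M k")
    case True
    then obtain J where J: "J1 \<subseteq> J" "J \<subseteq> M" "finite J" "card J = k"
      using extend_subset[of J1 M k] fk assms(1) by blast
    then show ?thesis using Some unfolding valid_output_def by auto
  next
    case False
    then have fm: "finite M" "card M < k" using not_card_ge by blast+
    have "\<forall>j\<le>k. card_ge M j \<longrightarrow> card M \<ge> j"
      unfolding card_ge_def using fm card_mono by blast
    then show ?thesis using Some assms(1) fm unfolding valid_output_def
      by (intro exI[of _ M]) auto
  qed
qed

lemma valid_output_fin: "valid_output (Some k) M J \<Longrightarrow> finite J \<and> card J \<le> k"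
  unfolding valid_output_def by auto

lemma valid_output_sub: "valid_output bd M J \<Longrightarrow> J \<subseteq> M"
  unfolding valid_output_def by auto

lemma matching_sub: "matching S I m b \<subseteq> I"
  unfolding matching_def by auto

lemma matching_mono: "I \<subseteq> I' \<Longrightarrow> matching S I m b \<subseteq> matching S I' m b"
  unfolding matching_def by auto

lemma accpart_Suc_sub:
  assumes "\<And>m b. m \<in> methods S \<Longrightarrow> binding S m (adom (accpart S \<sigma> i)) b \<Longrightarrow> \<sigma> m b \<subseteq> X"
  shows "accpart S \<sigma> (Suc i) \<subseteq> X"
  unfolding accpart.simps
proof (rule Union_least)
  fix Y assume "Y \<in> {\<sigma> m b |m b. m \<in> methods S \<and> binding S m (adom (accpart S \<sigma> i)) b}"
  then obtain m b where "Y = \<sigma> m b" "m \<in> methods S" "binding S m (adom (accpart S \<sigma> i)) b" by blast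
  then show "Y \<subseteq> X" using assms by blast
qed

lemma accpart_Suc_in:
  assumes "m \<in> methods S" "binding S m (adom (accpart S \<sigma> i)) b"
  shows "\<sigma> m b \<subseteq> accpart S \<sigma> (Suc i)"
  unfolding accpart.simps
  by (rule Union_upper) (use assms in blast)

lemma accpart_Suc_mono: "accpart S \<sigma> i \<subseteq> accpart S \<sigma> (Suc i)"
proof (induction i)
  case 0 then show ?case unfolding accpart.simps(1) by (rule empty_subsetI)
next
  case (Suc i)
  show ?case
  proof (rule accpart_Suc_sub)
    fix m b assume m: "m \<in> methods S" and b: "binding S m (adom (accpart S \<sigma> i)) b"
    show "\<sigma> m b \<subseteq> accpart S \<sigma> (Suc (Suc i))"
      by (rule accpart_Suc_in[OF m binding_mono[OF b adom_mono[OF Suc.IH]]])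
  qed
qed

lemma accpart_mono: "i \<le> j \<Longrightarrow> accpart S \<sigma> i \<subseteq> accpart S \<sigma> j"
  using lift_Suc_mono_le[of "accpart S \<sigma>"] accpart_Suc_mono by blast

lemma accpart_sub:
  assumes "valid_selection S I \<sigma>"
  shows "accpart S \<sigma> i \<subseteq> I"
proof (induction i)
  case 0 then show ?case by simp
next
  case (Suc i)
  have "\<And>m b. m \<in> methods S \<Longrightarrow> binding S m (adom (accpart S \<sigma> i)) b \<Longrightarrow> \<sigma> m b \<subseteq> I"
  proof -
    fix m b assume m: "m \<in> methods S" and b: "binding S m (adom (accpart S \<sigma> i)) b"
    have "binding S m (adom I) b" using binding_mono[OF b adom_mono[OF Suc.IH]] .
    then have "valid_output (mbound S m) (matching S I m b) (\<sigma> m b)"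
      by (rule assms[unfolded valid_selection_def, rule_format, OF m])
    from valid_output_sub[OF this] matching_sub show "\<sigma> m b \<subseteq> I" by (rule subset_trans)
  qed
  then show ?case by (rule accpart_Suc_sub)
qed

lemma finite_in_chain:
  fixes X :: "nat \<Rightarrow> 'a set"
  assumes "finite F" "F \<subseteq> (\<Union>i. X i)" "\<And>i j. i \<le> j \<Longrightarrow> X i \<subseteq> (X j :: 'a set)"
  shows "\<exists>N. F \<subseteq> X N"
  using assms(1,2)
proof (induction F rule: finite_induct)
  case empty then show ?case by blast
next
  case (insert x F)
  then obtain N where N: "F \<subseteq> X N" by blast
  obtain i where i: "x \<in> X i" using insert by blast
  have "X N \<subseteq> X (max N i)" "X i \<subseteq> X (max N i)"
  proof -
    have "N \<le> max N i" "i \<le> max N i" by (simp_all add: max_def)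
    then show "X N \<subseteq> X (max N i)" "X i \<subseteq> X (max N i)" using assms(3) by blast+
  qed
  then have "F \<subseteq> X (max N i)" "x \<in> X (max N i)" using N i by auto
  then show ?case by blast
qed

lemma adom_UN: "adom (\<Union>i. A i) = (\<Union>i. adom (A i))"
  unfolding adom_def by blast

lemma dir2:
  assumes wf: "wf_schema S"
    and H: "\<forall>I1 I2 Iacc. is_instance S I1 \<and> is_instance S I2 \<and> satisfies S I1 \<and> satisfies S I2 \<and>
       Iacc \<subseteq> I1 \<and> Iacc \<subseteq> I2 \<and> access_valid S I1 Iacc
       \<longrightarrow> (cq_holds Q I1 \<longrightarrow> cq_holds Q I2)"
  shows "access_mon_det S Q"
  unfolding access_mon_det_def
proof (intro allI impI)
  fix I1 I2
  assume a: "is_instance S I1 \<and> is_instance S I2 \<and> satisfies S I1 \<and> satisfies S I2 \<and>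
        (\<exists>A1 A2. accessible_part S I1 A1 \<and> accessible_part S I2 A2 \<and> A1 \<subseteq> A2)"
    and q: "cq_holds Q I1"
  from a obtain A1 A2 \<sigma>1 \<sigma>2 where s1: "valid_selection S I1 \<sigma>1" "A1 = (\<Union>i. accpart S \<sigma>1 i)"
    and s2: "valid_selection S I2 \<sigma>2" "A2 = (\<Union>i. accpart S \<sigma>2 i)" and sub: "A1 \<subseteq> A2"
    unfolding accessible_part_def by blast
  have A1I1: "A1 \<subseteq> I1" using s1 accpart_sub by blast
  have A2I2: "A2 \<subseteq> I2" using s2 accpart_sub by blast
  have av: "access_valid S I1 A1"
    unfolding access_valid_def
  proof (intro conjI ballI allI impI)
    show "A1 \<subseteq> I1" by (fact A1I1)
  next
    fix m b assume m: "m \<in> methods S" and b: "binding S m (adom A1) b"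
    have "finite (dom b)" using b m wf unfolding binding_def wf_schema_def
      by (metis finite_lessThan finite_subset)
    then have "finite (ran b)" by (rule finite_ran)
    moreover have "ran b \<subseteq> (\<Union>i. adom (accpart S \<sigma>1 i))"
      using b unfolding s1(2) adom_UN binding_def by (elim conjE)
    moreover have "\<And>i j. i \<le> j \<Longrightarrow> adom (accpart S \<sigma>1 i) \<subseteq> adom (accpart S \<sigma>1 j)"
      by (rule adom_mono[OF accpart_mono])
    ultimately obtain N where N: "ran b \<subseteq> adom (accpart S \<sigma>1 N)"
      using finite_in_chain[of "ran b" "\<lambda>i. adom (accpart S \<sigma>1 i)"] by blast
    have bN: "binding S m (adom (accpart S \<sigma>1 N)) b" using b N unfolding binding_def by blast
    have "\<sigma>1 m b \<subseteq> accpart S \<sigma>1 (Suc N)" using m bN by (rule accpart_Suc_in)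
    then have "\<sigma>1 m b \<subseteq> A1" using s1(2) by blast
    moreover have "binding S m (adom I1) b" using binding_mono[OF b adom_mono[OF A1I1]] .
    then have "valid_output (mbound S m) (matching S I1 m b) (\<sigma>1 m b)"
      by (rule s1(1)[unfolded valid_selection_def, rule_format, OF m])
    ultimately show "\<exists>J\<subseteq>A1. valid_output (mbound S m) (matching S I1 m b) J" by blast
  qed
  show "cq_holds Q I2"
    using H a av A1I1 sub A2I2 q by blast
qed

lemma dir1:
  assumes amd: "access_mon_det S Q"
    and a: "is_instance S I1" "is_instance S I2" "satisfies S I1" "satisfies S I2"
       "Iacc \<subseteq> I1" "Iacc \<subseteq> I2" "access_valid S I1 Iacc"
  shows "cq_holds Q I1 \<longrightarrow> cq_holds Q I2"
proof -
  define P where "P m b \<longleftrightarrow> m \<in> methods S \<and> binding S m (adom Iacc) b" for m b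
  define \<sigma>1 where "\<sigma>1 m b = (if P m b then (SOME J. J \<subseteq> Iacc \<and> valid_output (mbound S m) (matching S I1 m b) J)
      else (SOME J. valid_output (mbound S m) (matching S I1 m b) J))" for m b
  have ex_any: "\<exists>J. valid_output bd M J" for bd and M :: "('r,'v) inst"
    using extend_output[of "{}" M bd] by auto
  have s1P: "\<sigma>1 m b \<subseteq> Iacc \<and> valid_output (mbound S m) (matching S I1 m b) (\<sigma>1 m b)" if "P m b" for m b
  proof -
    have "\<exists>J. J \<subseteq> Iacc \<and> valid_output (mbound S m) (matching S I1 m b) J"
      using a(7) that unfolding P_def access_valid_def by blast
    then have "(SOME J. J \<subseteq> Iacc \<and> valid_output (mbound S m) (matching S I1 m b) J) \<subseteq> Iacc \<and>
       valid_output (mbound S m) (matching S I1 m b) (SOME J. J \<subseteq> Iacc \<and> valid_output (mbound S m) (matching S I1 m b) J)"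
      by (rule someI_ex)
    then show ?thesis using that unfolding \<sigma>1_def by simp
  qed
  have vs1: "valid_selection S I1 \<sigma>1"
    unfolding valid_selection_def
  proof (intro ballI allI impI)
    fix m b assume "m \<in> methods S" "binding S m (adom I1) b"
    show "valid_output (mbound S m) (matching S I1 m b) (\<sigma>1 m b)"
    proof (cases "P m b")
      case True then show ?thesis using s1P by blast
    next
      case False then show ?thesis unfolding \<sigma>1_def
        using someI_ex[OF ex_any[of "mbound S m" "matching S I1 m b"]] by simp
    qed
  qed
  define \<sigma>2 where "\<sigma>2 m b = (SOME J. (P m b \<longrightarrow> \<sigma>1 m b \<subseteq> J) \<and> valid_output (mbound S m) (matching S I2 m b) J)" for m b
  have s2: "(P m b \<longrightarrow> \<sigma>1 m b \<subseteq> \<sigma>2 m b) \<and> valid_output (mbound S m) (matching S I2 m b) (\<sigma>2 m b)" for m b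
  proof -
    have "\<exists>J. (P m b \<longrightarrow> \<sigma>1 m b \<subseteq> J) \<and> valid_output (mbound S m) (matching S I2 m b) J"
    proof (cases "P m b")
      case True
      then have v: "\<sigma>1 m b \<subseteq> Iacc" "valid_output (mbound S m) (matching S I1 m b) (\<sigma>1 m b)" using s1P by auto
      have "\<sigma>1 m b \<subseteq> matching S I1 m b" using v(2) valid_output_sub by blast
      then have "\<sigma>1 m b \<subseteq> matching S I2 m b" using v(1) a(6) unfolding matching_def by blast
      moreover have "\<And>k. mbound S m = Some k \<Longrightarrow> finite (\<sigma>1 m b) \<and> card (\<sigma>1 m b) \<le> k"
        using v(2) valid_output_fin by simp
      ultimately obtain J where "\<sigma>1 m b \<subseteq> J" "valid_output (mbound S m) (matching S I2 m b) J"
        using extend_output[of "\<sigma>1 m b" "matching S I2 m b" "mbound S m"] by blast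
      then show ?thesis by blast
    next
      case False
      obtain J where "valid_output (mbound S m) (matching S I2 m b) J"
        using ex_any[of "mbound S m" "matching S I2 m b"] by blast
      then show ?thesis using False by blast
    qed
    then show ?thesis unfolding \<sigma>2_def by (rule someI_ex)
  qed
  have vs2: "valid_selection S I2 \<sigma>2"
    unfolding valid_selection_def using s2 by blast
  have key: "accpart S \<sigma>1 i \<subseteq> Iacc \<and> accpart S \<sigma>1 i \<subseteq> accpart S \<sigma>2 i" for i
  proof (induction i)
    case 0 then show ?case by simp
  next
    case (Suc i)
    have H: "\<sigma>1 m b \<subseteq> Iacc \<and> \<sigma>1 m b \<subseteq> accpart S \<sigma>2 (Suc i)"
      if m: "m \<in> methods S" and b: "binding S m (adom (accpart S \<sigma>1 i)) b" for m b
    proof -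
      have "binding S m (adom Iacc) b" using binding_mono[OF b adom_mono[OF conjunct1[OF Suc.IH]]] .
      then have Pmb: "P m b" unfolding P_def using m by blast
      have "\<sigma>1 m b \<subseteq> Iacc" "\<sigma>1 m b \<subseteq> \<sigma>2 m b" using s1P[OF Pmb] s2[of m b] Pmb by auto
      moreover have "binding S m (adom (accpart S \<sigma>2 i)) b"
        using binding_mono[OF b adom_mono[OF conjunct2[OF Suc.IH]]] .
      then have "\<sigma>2 m b \<subseteq> accpart S \<sigma>2 (Suc i)" by (rule accpart_Suc_in[OF m])
      ultimately show ?thesis by blast
    qed
    have "accpart S \<sigma>1 (Suc i) \<subseteq> Iacc" by (rule accpart_Suc_sub) (rule conjunct1[OF H])
    moreover have "accpart S \<sigma>1 (Suc i) \<subseteq> accpart S \<sigma>2 (Suc i)"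
      by (rule accpart_Suc_sub) (rule conjunct2[OF H])
    ultimately show ?case by (rule conjI)
  qed
  have "accessible_part S I1 (\<Union>i. accpart S \<sigma>1 i)" unfolding accessible_part_def using vs1 by blast
  moreover have "accessible_part S I2 (\<Union>i. accpart S \<sigma>2 i)" unfolding accessible_part_def using vs2 by blast
  moreover have "(\<Union>i. accpart S \<sigma>1 i) \<subseteq> (\<Union>i. accpart S \<sigma>2 i)" using key by blast
  ultimately have ex: "\<exists>A1 A2. accessible_part S I1 A1 \<and> accessible_part S I2 A2 \<and> A1 \<subseteq> A2" by blast
  have "is_instance S I1 \<and> is_instance S I2 \<and> satisfies S I1 \<and> satisfies S I2 \<and>
        (\<exists>A1 A2. accessible_part S I1 A1 \<and> accessible_part S I2 A2 \<and> A1 \<subseteq> A2)"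
    using a(1-4) ex by blast
  then show ?thesis by (rule mp[OF spec[OF spec[OF amd[unfolded access_mon_det_def]], of I1 I2]])
qed

theorem mainTheorem3:
  fixes S :: "('r, 'v, 'm) schema" and Q :: "('r, 'v) bcq"
  assumes "wf_schema S"
  shows "access_mon_det S Q \<longleftrightarrow>
    (\<forall>I1 I2 Iacc. is_instance S I1 \<and> is_instance S I2 \<and> satisfies S I1 \<and> satisfies S I2 \<and>
       Iacc \<subseteq> I1 \<and> Iacc \<subseteq> I2 \<and> access_valid S I1 Iacc
       \<longrightarrow> (cq_holds Q I1 \<longrightarrow> cq_holds Q I2))"
proof
  assume h: "access_mon_det S Q"
  show "\<forall>I1 I2 Iacc. is_instance S I1 \<and> is_instance S I2 \<and> satisfies S I1 \<and> satisfies S I2 \<and>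
       Iacc \<subseteq> I1 \<and> Iacc \<subseteq> I2 \<and> access_valid S I1 Iacc
       \<longrightarrow> (cq_holds Q I1 \<longrightarrow> cq_holds Q I2)"
  proof (intro allI impI)
    fix I1 I2 Iacc
    assume c: "is_instance S I1 \<and> is_instance S I2 \<and> satisfies S I1 \<and> satisfies S I2 \<and>
       Iacc \<subseteq> I1 \<and> Iacc \<subseteq> I2 \<and> access_valid S I1 Iacc" and q: "cq_holds Q I1"
    have "cq_holds Q I1 \<longrightarrow> cq_holds Q I2"
      using c by (intro dir1[OF h]) (elim conjE; assumption)+
    then show "cq_holds Q I2" using q by (rule mp)
  qed
next
  assume "\<forall>I1 I2 Iacc. is_instance S I1 \<and> is_instance S I2 \<and> satisfies S I1 \<and> satisfies S I2 \<and>
       Iacc \<subseteq> I1 \<and> Iacc \<subseteq> I2 \<and> access_valid S I1 Iacc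
       \<longrightarrow> (cq_holds Q I1 \<longrightarrow> cq_holds Q I2)"
  then show "access_mon_det S Q" by (rule dir2[OF assms])
qed

end
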